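(* Consider adversarial bandits with $K$ actions and $N$ experts with oblivious losses $\ell_t\in[0,1]^K$ and expert advice $E_{i,t}\in[K]$, and $L_T^*=\min_{i\in[N]}\sum_{t=1}^T\ell_{t,E_{i,t}}$. Let $\tilde\Phi(L)=\mathbb{E}[\min_{p\in\Delta_N}\langle L,p\rangle+F(p,Z)]$ with $\nabla\tilde\Phi\in\Delta_N$, and suppose the full-information GBPA with potential $\tilde\Phi$ is DiffStable($D_\infty$, $\|\cdot\|_\infty$) at level $\epsilon$, i.e. $D_\infty(\nabla\tilde\Phi(\sum_{s<t}v_s),\nabla\tilde\Phi(\sum_{s\le t}v_s))\le\epsilon\|v_t\|_\infty$ for all $t$ and all $v_1,\dots,v_t\in[0,\infty)^N$. Run the following algorithm without clipping: $\bar\phi_0=0$; for each $t$, $p_t=\nabla\tilde\Phi(\bar\phi_{t-1})$, $q_t=\psi_t(p_t)$ where $\psi_t(p)=\sum_{j=1}^K\sum_{i:E_{i,t}=j}p_i\mathbf{e}_j$; draw $j_t\sim q_t$, observe $\ell_{t,j_t}$, set $\hat\ell_t=\frac{\ell_{t,j_t}}{q_{t,j_t}}\mathbf{e}_{j_t}\in\mathbb{R}^K$ and $\bar\phi_t=\bar\phi_{t-1}+\phi_t(\hat\ell_t)$ where $\phi_t(\hat\ell)=\sum_{j=1}^K\sum_{i:E_{i,t}=j}\hat\ell_j\mathbf{e}_i\in\mathbb{R}^N$. Then \[\mathbb{E}\Big[\sum_{t=1}^T\ell_{t,j_t}\Big]-L_T^*\le\epsilon\,\mathbb{E}\Big[\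sum_{t=1}^T\hat\ell_{t,j_t}^2q_{t,j_t}\Big]+\mathbb{E}\Big[\max_pF(p,Z)-\min_pF(p,Z)\Big].\]
   Context: $\Delta_m$ is the probability simplex in $\mathbb{R}^m$; max and min over $p$ are over $\Delta_N$. For distributions $P,Q$, $D_\infty(P,Q)=\sup_B\log\frac{P(B)}{Q(B)}$. Expectations are over the learner's randomness and $Z$. *)

theory Defs
  imports "HOL-Probability.Probability"
begin

text \<open>Experts are elements of a finite type 'n (N = CARD('n)), actions elements of a
finite type 'k (K = CARD('k)). Rounds are indexed 1..T.\<close>

definition prob_simplex :: "(real^'n::finite) set" where
  "prob_simplex = {p. (\<forall>i. 0 \<le> p $ i) \<and> (\<Sum>i\<in>UNIV. p $ i) = 1}"

definition dinf :: "real^'n::finite \<Rightarrow> real^'n \<Rightarrow> ereal" where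
  "dinf P Q = (SUP B\<in>{B. 0 < (\<Sum>i\<in>B. P $ i)}.
      (if (\<Sum>i\<in>B. Q $ i) = 0 then \<infinity>
       else ereal (ln ((\<Sum>i\<in>B. P $ i) / (\<Sum>i\<in>B. Q $ i)))))"

definition Phi_tilde :: "'z measure \<Rightarrow> (real^'n::finite \<Rightarrow> 'z \<Rightarrow> real) \<Rightarrow> real^'n \<Rightarrow> real" where
  "Phi_tilde M F L = (\<integral>z. (INF p\<in>prob_simplex. L \<bullet> p + F p z) \<partial>M)"

text \<open>Cumulative estimated loss vector  bar-phi_t  of the algorithm along the action
history js (js t = j_t), given gradient map g, expert advice E and losses l.\<close>
fun cumest :: "(real^'n::finite \<Rightarrow> real^'n) \<Rightarrow> ('n \<Rightarrow> nat \<Rightarrow> 'k::finite)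
      \<Rightarrow> (nat \<Rightarrow> 'k \<Rightarrow> real) \<Rightarrow> (nat \<Rightarrow> 'k) \<Rightarrow> nat \<Rightarrow> real^'n" where
  "cumest g E l js 0 = 0"
| "cumest g E l js (Suc t) =
     (let p = g (cumest g E l js t);
          q = (\<Sum>i\<in>{i. E i (Suc t) = js (Suc t)}. p $ i)
      in cumest g E l js t +
         (\<chi> i. if E i (Suc t) = js (Suc t) then l (Suc t) (js (Suc t)) / q else 0))"

definition pvec :: "(real^'n::finite \<Rightarrow> real^'n) \<Rightarrow> ('n \<Rightarrow> nat \<Rightarrow> 'k::finite)
      \<Rightarrow> (nat \<Rightarrow> 'k \<Rightarrow> real) \<Rightarrow> (nat \<Rightarrow> 'k) \<Rightarrow> nat \<Rightarrow> real^'n" where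
  "pvec g E l js t = g (cumest g E l js (t - 1))"

definition qprob :: "(real^'n::finite \<Rightarrow> real^'n) \<Rightarrow> ('n \<Rightarrow> nat \<Rightarrow> 'k::finite)
      \<Rightarrow> (nat \<Rightarrow> 'k \<Rightarrow> real) \<Rightarrow> (nat \<Rightarrow> 'k) \<Rightarrow> nat \<Rightarrow> 'k \<Rightarrow> real" where
  "qprob g E l js t j = (\<Sum>i\<in>{i. E i t = j}. pvec g E l js t $ i)"

definition lhat :: "(real^'n::finite \<Rightarrow> real^'n) \<Rightarrow> ('n \<Rightarrow> nat \<Rightarrow> 'k::finite)
      \<Rightarrow> (nat \<Rightarrow> 'k \<Rightarrow> real) \<Rightarrow> (nat \<Rightarrow> 'k) \<Rightarrow> nat \<Rightarrow> real" where
  "lhat g E l js t = l t (js t) / qprob g E l js t (js t)"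

text \<open>Expectation over the learner's randomness of a functional f of the action
history j_1..j_T, where j_t ~ q_t given j_1..j_{t-1} (chain rule).\<close>
definition ExpL :: "(real^'n::finite \<Rightarrow> real^'n) \<Rightarrow> ('n \<Rightarrow> nat \<Rightarrow> 'k::finite)
      \<Rightarrow> (nat \<Rightarrow> 'k \<Rightarrow> real) \<Rightarrow> nat \<Rightarrow> ((nat \<Rightarrow> 'k) \<Rightarrow> real) \<Rightarrow> real" where
  "ExpL g E l T f = (\<Sum>js\<in>PiE {1..T} (\<lambda>_. UNIV).
       (\<Prod>t\<in>{1..T}. qprob g E l js t (js t)) * f js)"

end

theory Submission
  imports Defs
begin


lemma tangent:
  fixes P :: "'a::real_inner \<Rightarrow> real"
  assumes conc: "\<And>x y t. 0 < t \<Longrightarrow> t < 1 \<Longrightarrow> (1-t) * P x + t * P y \<le> P ((1-t) *\<^sub>R x + t *\<^sub>R y)"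
    and der: "\<And>L. (P has_derivative (\<lambda>h. g L \<bullet> h)) (at L)"
  shows "P y \<le> P x + g x \<bullet> (y - x)"
proof -
  define h where "h s = - P (x + s *\<^sub>R (y - x))" for s :: real
  have cv: "convex_on UNIV h"
  proof (rule convex_onI)
    fix t a b :: real assume t: "0 < t" "t < 1"
    have e: "x + ((1 - t) * a + t * b) *\<^sub>R (y - x) = (1-t) *\<^sub>R (x + a *\<^sub>R (y - x)) + t *\<^sub>R (x + b *\<^sub>R (y - x))"
      by (simp add: algebra_simps scaleR_left_diff_distrib)
    show "h ((1 - t) *\<^sub>R a + t *\<^sub>R b) \<le> (1 - t) * h a + t * h b"
      using conc[OF t, of "x + a *\<^sub>R (y - x)" "x + b *\<^sub>R (y - x)"] unfolding h_def e[symmetric] by simp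
  qed simp
  have d1: "((\<lambda>s. x + s *\<^sub>R (y - x)) has_derivative (\<lambda>s. s *\<^sub>R (y - x))) (at 0)"
    by (auto intro!: derivative_eq_intros)
  have d2: "((\<lambda>s. P (x + s *\<^sub>R (y - x))) has_derivative (\<lambda>s. g x \<bullet> (s *\<^sub>R (y - x)))) (at 0)"
    using has_derivative_compose[OF d1, of P "\<lambda>h. g x \<bullet> h"] der[of x] by simp
  have d3: "(h has_derivative (\<lambda>s. - (g x \<bullet> (s *\<^sub>R (y - x))))) (at 0)"
    unfolding h_def using has_derivative_minus[OF d2] by simp
  have "(\<lambda>s. - (g x \<bullet> (s *\<^sub>R (y - x)))) = (*) (- (g x \<bullet> (y - x)))"
    by (auto simp: inner_scaleR_right)
  with d3 have "(h has_field_derivative (- (g x \<bullet> (y - x)))) (at 0 within UNIV)"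
    by (simp add: has_field_derivative_def)
  from convex_on_imp_above_tangent[OF cv _ _ _ this, of 1]
  have "h 1 - h 0 \<ge> - (g x \<bullet> (y - x)) * (1 - 0)" by simp
  then show ?thesis by (simp add: h_def)
qed



lemma inf_eq:
  assumes "p \<in> A" "\<forall>q\<in>A. f p \<le> (f q::real)"
  shows "(INF q\<in>A. f q) = f p"
  using assms by (intro cInf_eq_minimum) auto

lemma inf_le:
  assumes "\<exists>p\<in>A. \<forall>q\<in>A. f p \<le> (f q::real)" "q \<in> A"
  shows "(INF q\<in>A. f q) \<le> f q"
  using assms inf_eq by metis

lemma sup_ge:
  assumes "\<exists>p\<in>A. \<forall>q\<in>A. f q \<le> (f p::real)" "q \<in> A"
  shows "f q \<le> (SUP q\<in>A. f q)"
proof -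
  obtain p where p: "p \<in> A" "\<forall>q\<in>A. f q \<le> f p" using assms by auto
  have "(SUP q\<in>A. f q) = f p" using p by (intro cSup_eq_maximum) auto
  with p assms show ?thesis by auto
qed

lemma conc_pt:
  fixes F :: "real^'n::finite \<Rightarrow> 'z \<Rightarrow> real"
  assumes min_attained: "\<forall>z L. \<exists>p\<in>prob_simplex. \<forall>q\<in>prob_simplex. L \<bullet> p + F p z \<le> L \<bullet> q + F q z"
    and that: "0 < t" "t < 1"
  shows "(1-t) * (INF p\<in>prob_simplex. x \<bullet> p + F p z) + t * (INF p\<in>prob_simplex. y \<bullet> p + F p z)
     \<le> (INF p\<in>prob_simplex. ((1-t) *\<^sub>R x + t *\<^sub>R y) \<bullet> p + F p z)"
proof -
  obtain p where p: "p \<in> prob_simplex" "\<forall>q\<in>prob_simplex. ((1-t) *\<^sub>R x + t *\<^sub>R y) \<bullet> p + F p z \<le> ((1-t) *\<^sub>R x + t *\<^sub>R y) \<bullet> q + F q z"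
    using min_attained by blast
  have "(INF p\<in>prob_simplex. ((1-t) *\<^sub>R x + t *\<^sub>R y) \<bullet> p + F p z) = ((1-t) *\<^sub>R x + t *\<^sub>R y) \<bullet> p + F p z"
    by (rule inf_eq[OF p])
  also have "\<dots> = (1-t) * (x \<bullet> p + F p z) + t * (y \<bullet> p + F p z)"
    by (simp add: inner_add_left algebra_simps)
  finally have e: "(INF p\<in>prob_simplex. ((1-t) *\<^sub>R x + t *\<^sub>R y) \<bullet> p + F p z) = (1-t) * (x \<bullet> p + F p z) + t * (y \<bullet> p + F p z)" .
  have a: "(INF p\<in>prob_simplex. x \<bullet> p + F p z) \<le> x \<bullet> p + F p z"
    using min_attained p(1) by (intro inf_le) auto
  have b: "(INF p\<in>prob_simplex. y \<bullet> p + F p z) \<le> y \<bullet> p + F p z"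
    using min_attained p(1) by (intro inf_le) auto
  show ?thesis unfolding e using a b that
    by (intro add_mono mult_left_mono) auto
qed

lemma conc_Phi:
  fixes F :: "real^'n::finite \<Rightarrow> 'z \<Rightarrow> real"
  assumes min_attained: "\<forall>z L. \<exists>p\<in>prob_simplex. \<forall>q\<in>prob_simplex. L \<bullet> p + F p z \<le> L \<bullet> q + F q z"
    and integ_Phi: "\<forall>L. integrable M (\<lambda>z. INF p\<in>prob_simplex. L \<bullet> p + F p z)"
    and t: "0 < t" "t < 1"
  shows "(1-t) * Phi_tilde M F x + t * Phi_tilde M F y \<le> Phi_tilde M F ((1-t) *\<^sub>R x + t *\<^sub>R y)"
proof -
  have "(1-t) * Phi_tilde M F x + t * Phi_tilde M F y =
     (\<integral>z. (1-t) * (INF p\<in>prob_simplex. x \<bullet> p + F p z) + t * (INF p\<in>prob_simplex. y \<bullet> p + F p z) \<partial>M)"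
    unfolding Phi_tilde_def using integ_Phi by simp
  also have "\<dots> \<le> Phi_tilde M F ((1-t) *\<^sub>R x + t *\<^sub>R y)"
    unfolding Phi_tilde_def using integ_Phi
    by (intro integral_mono conc_pt[OF min_attained t]) auto
  finally show ?thesis .
qed



lemma cumest_cong:
  "(\<forall>s\<in>{1..t}. js s = js' s) \<Longrightarrow> cumest g E l js t = cumest g E l js' t"
proof (induction t)
  case 0 then show ?case by simp
next
  case (Suc t)
  then have "cumest g E l js t = cumest g E l js' t" by auto
  moreover have e2: "js (Suc t) = js' (Suc t)" using Suc.prems by auto
  ultimately show ?case unfolding cumest.simps Let_def by (simp only: e2)
qed

lemma qprob_cong:
  "(\<forall>s\<in>{1..t-1}. js s = js' s) \<Longrightarrow> qprob g E l js t j = qprob g E l js' t j"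
  unfolding qprob_def pvec_def using cumest_cong[of "t-1" js js' g E l] by simp

lemma qS: "qprob g E l js (Suc t) j = (\<Sum>i\<in>{i. E i (Suc t) = j}. g (cumest g E l js t) $ i)"
  unfolding qprob_def pvec_def by simp

lemma cumest_Suc:
  "cumest g E l js (Suc t) = cumest g E l js t +
     (\<chi> i. if E i (Suc t) = js (Suc t) then l (Suc t) (js (Suc t)) / qprob g E l js (Suc t) (js (Suc t)) else 0)"
  unfolding qS by (simp add: Let_def)

lemma sum_PiE_Suc:
  fixes f :: "(nat \<Rightarrow> 'k::finite) \<Rightarrow> real"
  shows "(\<Sum>js\<in>PiE {1..Suc T} (\<lambda>_. UNIV). f js) =
         (\<Sum>js\<in>PiE {1..T} (\<lambda>_. UNIV). \<Sum>j\<in>UNIV. f (js(Suc T := j)))"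
proof -
  have s: "{1..Suc T} = insert (Suc T) {1..T}" by auto
  have "(\<Sum>js\<in>PiE {1..Suc T} (\<lambda>_. UNIV). f js) =
     (\<Sum>x\<in>UNIV \<times> PiE {1..T} (\<lambda>_. UNIV::'k set). f ((\<lambda>(y, g). g(Suc T := y)) x))"
    unfolding s PiE_insert_eq
    by (subst sum.reindex[OF inj_combinator]) auto
  also have "\<dots> = (\<Sum>j\<in>UNIV. \<Sum>js\<in>PiE {1..T} (\<lambda>_. UNIV::'k set). f (js(Suc T := j)))"
    by (subst sum.cartesian_product) (simp add: case_prod_beta)
  also have "\<dots> = (\<Sum>js\<in>PiE {1..T} (\<lambda>_. UNIV). \<Sum>j\<in>UNIV. f (js(Suc T := j)))"
    by (rule sum.swap)
  finally show ?thesis .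
qed

definition W where "W g E l T js = (\<Prod>t\<in>{1..T}. qprob g E l js t (js t))"

lemma ExpL_W: "ExpL g E l T f = (\<Sum>js\<in>PiE {1..T} (\<lambda>_. UNIV). W g E l T js * f js)"
  unfolding ExpL_def W_def ..

lemma W_upd: "js \<in> PiE {1..T} (\<lambda>_. UNIV) \<Longrightarrow>
   W g E l (Suc T) (js(Suc T := j)) = W g E l T js * qprob g E l js (Suc T) j"
proof -
  have a: "W g E l T (js(Suc T := j)) = W g E l T js"
    unfolding W_def
    by (intro prod.cong refl, subst qprob_cong[where js'=js]) auto
  have b: "qprob g E l (js(Suc T := j)) (Suc T) j = qprob g E l js (Suc T) j"
    by (rule qprob_cong) auto
  have s: "{1..Suc T} = insert (Suc T) {1..T}" by auto
  show ?thesis using a b unfolding s by (simp add: W_def)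
qed

lemma sum_qprob:
  assumes gs: "\<forall>L. g L \<in> prob_simplex"
  shows "(\<Sum>j\<in>UNIV. qprob g E l js t j) = 1"
proof -
  have "(\<Sum>j\<in>UNIV. qprob g E l js t j) = (\<Sum>i\<in>UNIV. pvec g E l js t $ i)"
    unfolding qprob_def using sum.group[of UNIV UNIV "\<lambda>i. E i t" "\<lambda>i. pvec g E l js t $ i"] by simp
  also have "\<dots> = 1" using gs unfolding pvec_def prob_simplex_def by auto
  finally show ?thesis .
qed

lemma qprob_nonneg:
  assumes gs: "\<forall>L. g L \<in> prob_simplex"
  shows "0 \<le> qprob g E l js t j"
  using gs unfolding qprob_def pvec_def prob_simplex_def by (auto intro: sum_nonneg)

lemma W_nonneg:
  assumes gs: "\<forall>L. g L \<in> prob_simplex"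
  shows "0 \<le> W g E l T js"
  unfolding W_def by (intro prod_nonneg qprob_nonneg[OF gs])

lemma ExpL_Suc:
  "ExpL g E l (Suc T) f = (\<Sum>js\<in>PiE {1..T} (\<lambda>_. UNIV). W g E l T js *
       (\<Sum>j\<in>UNIV. qprob g E l js (Suc T) j * f (js(Suc T := j))))"
  unfolding ExpL_W sum_PiE_Suc
  by (intro sum.cong refl) (simp add: W_upd sum_distrib_left mult.assoc)

lemma sum_W:
  assumes gs: "\<forall>L. g L \<in> prob_simplex"
  shows "(\<Sum>js\<in>PiE {1..T} (\<lambda>_. UNIV::'k::finite set). W g E l T js) = 1"
proof (induction T)
  case 0 then show ?case by (simp add: W_def)
next
  case (Suc T)
  have "(\<Sum>js\<in>PiE {1..Suc T} (\<lambda>_. UNIV::'k set). W g E l (Suc T) js) = ExpL g E l (Suc T) (\<lambda>_. 1)"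
    by (simp add: ExpL_W)
  also have "\<dots> = (\<Sum>js\<in>PiE {1..T} (\<lambda>_. UNIV::'k set). W g E l T js)"
    unfolding ExpL_Suc by (simp add: sum_qprob[OF gs])
  finally show ?case using Suc by simp
qed

lemma unbiased:
  assumes gs: "\<forall>L. g L \<in> prob_simplex" and lr: "\<forall>t j. 0 \<le> l t j"
  shows "ExpL g E l T (\<lambda>js. cumest g E l js T $ i) \<le> (\<Sum>t\<in>{1..T}. l t (E i t))"
proof (induction T)
  case 0 then show ?case by (simp add: ExpL_W)
next
  case (Suc T)
  let ?q = "\<lambda>js j. qprob g E l js (Suc T) j"
  have step: "(\<Sum>j\<in>UNIV. ?q js j * cumest g E l (js(Suc T := j)) (Suc T) $ i)
      \<le> cumest g E l js T $ i + l (Suc T) (E i (Suc T))"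
    if js: "js \<in> PiE {1..T} (\<lambda>_. UNIV)" for js
  proof -
    have ce: "cumest g E l (js(Suc T := j)) T = cumest g E l js T" for j
      by (rule cumest_cong) auto
    have qe: "qprob g E l (js(Suc T := j)) (Suc T) j' = ?q js j'" for j j'
      by (rule qprob_cong) auto
    have "(\<Sum>j\<in>UNIV. ?q js j * cumest g E l (js(Suc T := j)) (Suc T) $ i)
       = (\<Sum>j\<in>UNIV. ?q js j * cumest g E l js T $ i + (if E i (Suc T) = j then ?q js j * (l (Suc T) j / ?q js j) else 0))"
      by (intro sum.cong refl) (simp del: cumest.simps add: cumest_Suc ce qe algebra_simps)
    also have "\<dots> = cumest g E l js T $ i + ?q js (E i (Suc T)) * (l (Suc T) (E i (Suc T)) / ?q js (E i (Suc T)))"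
      by (simp add: sum.distrib sum_distrib_right[symmetric] sum_qprob[OF gs])
    also have "\<dots> \<le> cumest g E l js T $ i + l (Suc T) (E i (Suc T))"
      using lr by (cases "?q js (E i (Suc T)) = 0") auto
    finally show ?thesis .
  qed
  have "ExpL g E l (Suc T) (\<lambda>js. cumest g E l js (Suc T) $ i)
     \<le> (\<Sum>js\<in>PiE {1..T} (\<lambda>_. UNIV). W g E l T js * (cumest g E l js T $ i + l (Suc T) (E i (Suc T))))"
    unfolding ExpL_Suc
    by (intro sum_mono mult_left_mono step W_nonneg[OF gs]) auto
  also have "\<dots> = ExpL g E l T (\<lambda>js. cumest g E l js T $ i) + l (Suc T) (E i (Suc T))"
    using sum_W[OF gs, where T=T and E=E and l=l] by (simp add: ExpL_W algebra_simps sum.distrib sum_distrib_right[symmetric])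
  also have "\<dots> \<le> (\<Sum>t\<in>{1..Suc T}. l t (E i t))"
    using Suc by simp
  finally show ?case .
qed



lemma dinf_coord:
  assumes P: "P \<in> prob_simplex" and Q: "Q \<in> prob_simplex" and d: "dinf P Q \<le> ereal \<delta>"
  shows "P$i - Q$i \<le> \<delta> * P$i"
proof (cases "P$i > 0")
  case False
  then have "P$i = 0" using P unfolding prob_simplex_def by (auto intro: antisym)
  then show ?thesis using Q unfolding prob_simplex_def by auto
next
  case True
  have mem: "{i} \<in> {B. 0 < (\<Sum>i\<in>B. P $ i)}" using True by simp
  have "(if (\<Sum>j\<in>{i}. Q $ j) = 0 then \<infinity> else ereal (ln ((\<Sum>j\<in>{i}. P $ j) / (\<Sum>j\<in>{i}. Q $ j)))) \<le> dinf P Q"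
    unfolding dinf_def by (rule SUP_upper[OF mem])
  moreover have sP: "(\<Sum>j\<in>{i}. P $ j) = P$i" "(\<Sum>j\<in>{i}. Q $ j) = Q$i" by simp_all
  ultimately have "(if Q$i = 0 then \<infinity> else ereal (ln (P$i / Q$i))) \<le> dinf P Q" by (simp only: sP)
  with d have h: "(if Q$i = 0 then \<infinity> else ereal (ln (P$i / Q$i))) \<le> ereal \<delta>" by (rule order_trans[rotated])
  have Qn: "Q$i \<noteq> 0" using h by (cases "Q$i = 0") auto
  have "0 \<le> Q$i" using Q unfolding prob_simplex_def by simp
  with Qn have Q0: "Q$i > 0" by simp
  have "ln (P$i / Q$i) \<le> \<delta>" using h Qn by simp
  moreover have "0 < P$i / Q$i" using True Q0 by simp
  ultimately have "P$i / Q$i \<le> exp \<delta>" by (metis exp_le_cancel_iff exp_ln)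
  then have "P$i \<le> exp \<delta> * Q$i" using Q0 by (simp add: divide_le_eq)
  then have "P$i * exp (-\<delta>) \<le> Q$i" by (simp add: exp_minus field_simps)
  moreover have "1 - \<delta> \<le> exp (-\<delta>)" using exp_ge_add_one_self[of "-\<delta>"] by simp
  ultimately have "P$i * (1 - \<delta>) \<le> Q$i" using True
    by (smt (verit) mult_left_mono)
  then show ?thesis by (simp add: algebra_simps)
qed

lemma dinf_inner:
  assumes P: "P \<in> prob_simplex" and Q: "Q \<in> prob_simplex" and d: "dinf P Q \<le> ereal \<delta>"
    and v: "\<forall>i. 0 \<le> v$i"
  shows "(P - Q) \<bullet> v \<le> \<delta> * (P \<bullet> v)"
proof -
  have "(P - Q) \<bullet> v = (\<Sum>i\<in>UNIV. (P$i - Q$i) * v$i)" by (simp add: inner_vec_def)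
  also have "\<dots> \<le> (\<Sum>i\<in>UNIV. (\<delta> * P$i) * v$i)"
    by (intro sum_mono mult_right_mono dinf_coord[OF P Q d]) (use v in auto)
  also have "\<dots> = \<delta> * (P \<bullet> v)" by (simp add: inner_vec_def sum_distrib_left mult.assoc)
  finally show ?thesis .
qed



lemma sum_inc:
  "(\<Sum>r\<in>{1..n}. cumest g E l js r - cumest g E l js (r - 1)) = cumest g E l js n"
  by (induction n) auto

lemma inc_nonneg:
  assumes gs: "\<forall>L. g L \<in> prob_simplex" and lr: "\<forall>t j. 0 \<le> l t j" and r: "r \<ge> 1"
  shows "0 \<le> (cumest g E l js r - cumest g E l js (r - 1)) $ i"
proof -
  obtain r' where r': "r = Suc r'" using r by (cases r) auto
  show ?thesis unfolding r' using lr qprob_nonneg[OF gs]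
    by (auto simp del: cumest.simps simp add: cumest_Suc intro!: divide_nonneg_nonneg qprob_nonneg[OF gs])
qed

lemma step:
  fixes M :: "'z measure"
    and F :: "real^'n::finite \<Rightarrow> 'z \<Rightarrow> real"
    and g :: "real^'n \<Rightarrow> real^'n"
    and E :: "'n \<Rightarrow> nat \<Rightarrow> 'k::finite"
    and l :: "nat \<Rightarrow> 'k \<Rightarrow> real"
  assumes min_attained: "\<forall>z L. \<exists>p\<in>prob_simplex. \<forall>q\<in>prob_simplex. L \<bullet> p + F p z \<le> L \<bullet> q + F q z"
    and integ_Phi: "\<forall>L. integrable M (\<lambda>z. INF p\<in>prob_simplex. L \<bullet> p + F p z)"
    and grad: "\<forall>L. (Phi_tilde M F has_derivative (\<lambda>h. g L \<bullet> h)) (at L)"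
    and gs: "\<forall>L. g L \<in> prob_simplex"
    and stable: "\<forall>t (v :: nat \<Rightarrow> real^'n). t \<ge> 1 \<longrightarrow> (\<forall>s\<in>{1..t}. \<forall>i. 0 \<le> v s $ i) \<longrightarrow>
        dinf (g (\<Sum>s\<in>{1..<t}. v s)) (g (\<Sum>s\<in>{1..t}. v s)) \<le> ereal (\<epsilon> * infnorm (v t))"
    and lr: "\<forall>t j. 0 \<le> l t j"
    and q: "qprob g E l js (Suc s) (js (Suc s)) \<noteq> 0"
  shows "l (Suc s) (js (Suc s)) \<le> Phi_tilde M F (cumest g E l js (Suc s)) - Phi_tilde M F (cumest g E l js s)
      + \<epsilon> * ((lhat g E l js (Suc s))\<^sup>2 * qprob g E l js (Suc s) (js (Suc s)))"
proof -
  define t where "t = Suc s"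
  define J where "J = js t"
  define Q where "Q = qprob g E l js t J"
  define L where "L = l t J"
  define c where "c = cumest g E l js"
  define v where "v = c t - c s"
  define p where "p = g (c s)"
  have Q0: "Q \<noteq> 0" using q by (simp add: Q_def t_def J_def)
  have Qge: "0 \<le> Q" unfolding Q_def by (rule qprob_nonneg[OF gs])
  have Lge: "0 \<le> L" using lr by (simp add: L_def)
  have v_eq: "v = (\<chi> i. if E i t = J then L / Q else 0)"
    unfolding v_def c_def t_def J_def L_def Q_def by (simp del: cumest.simps add: cumest_Suc)
  have Qs: "Q = (\<Sum>i\<in>{i. E i t = J}. p $ i)"
    unfolding Q_def p_def c_def t_def by (simp add: qS)
  have pv: "p \<bullet> v = L"
  proof -
    have "p \<bullet> v = (\<Sum>i\<in>UNIV. if E i t = J then p $ i * (L / Q) else 0)"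
      by (simp add: v_eq inner_vec_def if_distrib cong: if_cong)
    also have "\<dots> = (\<Sum>i\<in>{i. E i t = J}. p $ i) * (L / Q)"
      by (simp add: sum.inter_filter[symmetric] sum_distrib_right del: times_divide_eq_right)
    also have "\<dots> = L" using Q0 Qs by simp
    finally show ?thesis .
  qed
  have ne: "{i. E i t = J} \<noteq> {}" using Q0 Qs by (metis sum.empty)
  then obtain i0 where i0: "E i0 t = J" by auto
  have inf: "infnorm v = L / Q"
  proof (rule antisym)
    show "infnorm v \<le> L / Q" unfolding infnorm_cart
      by (rule cSup_least) (use Lge Qge in \<open>auto simp: v_eq\<close>)
    show "L / Q \<le> infnorm v"
      using component_le_infnorm_cart[of v i0] i0 Lge Qge by (simp add: v_eq)
  qed
  define V where "V r = c r - c (r - 1)" for r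
  have sV: "(\<Sum>r\<in>{1..n}. V r) = c n" for n unfolding V_def c_def by (rule sum_inc)
  have sV': "(\<Sum>r\<in>{1..<t}. V r) = c s" unfolding t_def using sV[of s]
    by (simp add: atLeastLessThanSuc_atLeastAtMost)
  have Vn: "\<forall>r\<in>{1..t}. \<forall>i. 0 \<le> V r $ i"
    unfolding V_def c_def using inc_nonneg[OF gs lr] by auto
  have "dinf (g (\<Sum>r\<in>{1..<t}. V r)) (g (\<Sum>r\<in>{1..t}. V r)) \<le> ereal (\<epsilon> * infnorm (V t))"
    using stable[rule_format, of "Suc s" V] Vn unfolding t_def by simp
  then have d: "dinf p (g (c t)) \<le> ereal (\<epsilon> * (L / Q))"
    unfolding sV sV' p_def using inf by (simp add: V_def t_def v_def)
  have vn: "\<forall>i. 0 \<le> v $ i" using Lge Qge by (simp add: v_eq)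
  have a: "(p - g (c t)) \<bullet> v \<le> \<epsilon> * (L / Q) * (p \<bullet> v)"
    using dinf_inner[OF _ _ d vn] gs unfolding p_def by blast
  have conc: "\<And>x y t. 0 < t \<Longrightarrow> t < 1 \<Longrightarrow> (1-t) * Phi_tilde M F x + t * Phi_tilde M F y \<le> Phi_tilde M F ((1-t) *\<^sub>R x + t *\<^sub>R y)"
    by (rule conc_Phi[OF min_attained integ_Phi])
  have b: "Phi_tilde M F (c s) \<le> Phi_tilde M F (c t) + g (c t) \<bullet> (c s - c t)"
    by (rule tangent[OF conc grad[rule_format]])
  have "c s - c t = - v" unfolding v_def by simp
  with b have b': "g (c t) \<bullet> v \<le> Phi_tilde M F (c t) - Phi_tilde M F (c s)" by simp
  have "L = (p - g (c t)) \<bullet> v + g (c t) \<bullet> v" using pv by (simp add: inner_diff_left)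
  also have "\<dots> \<le> \<epsilon> * (L / Q) * L + (Phi_tilde M F (c t) - Phi_tilde M F (c s))"
    using a b' pv by simp
  also have "\<epsilon> * (L / Q) * L = \<epsilon> * ((L / Q)\<^sup>2 * Q)" using Q0 by (simp add: power2_eq_square)
  finally show ?thesis
    unfolding lhat_def L_def Q_def J_def c_def t_def by simp
qed



lemma pathwise:
  fixes M :: "'z measure"
    and F :: "real^'n::finite \<Rightarrow> 'z \<Rightarrow> real"
    and g :: "real^'n \<Rightarrow> real^'n"
    and E :: "'n \<Rightarrow> nat \<Rightarrow> 'k::finite"
    and l :: "nat \<Rightarrow> 'k \<Rightarrow> real"
  assumes min_attained: "\<forall>z L. \<exists>p\<in>prob_simplex. \<forall>q\<in>prob_simplex. L \<bullet> p + F p z \<le> L \<bullet> q + F q z"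
    and integ_Phi: "\<forall>L. integrable M (\<lambda>z. INF p\<in>prob_simplex. L \<bullet> p + F p z)"
    and grad: "\<forall>L. (Phi_tilde M F has_derivative (\<lambda>h. g L \<bullet> h)) (at L)"
    and gs: "\<forall>L. g L \<in> prob_simplex"
    and stable: "\<forall>t (v :: nat \<Rightarrow> real^'n). t \<ge> 1 \<longrightarrow> (\<forall>s\<in>{1..t}. \<forall>i. 0 \<le> v s $ i) \<longrightarrow>
        dinf (g (\<Sum>s\<in>{1..<t}. v s)) (g (\<Sum>s\<in>{1..t}. v s)) \<le> ereal (\<epsilon> * infnorm (v t))"
    and lr: "\<forall>t j. 0 \<le> l t j"
  shows "(\<forall>t\<in>{1..T}. qprob g E l js t (js t) \<noteq> 0) \<Longrightarrow>
     (\<Sum>t\<in>{1..T}. l t (js t)) \<le> Phi_tilde M F (cumest g E l js T) - Phi_tilde M F 0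
      + \<epsilon> * (\<Sum>t\<in>{1..T}. (lhat g E l js t)\<^sup>2 * qprob g E l js t (js t))"
proof (induction T)
  case 0 then show ?case by simp
next
  case (Suc T)
  have IH: "(\<Sum>t\<in>{1..T}. l t (js t)) \<le> Phi_tilde M F (cumest g E l js T) - Phi_tilde M F 0
      + \<epsilon> * (\<Sum>t\<in>{1..T}. (lhat g E l js t)\<^sup>2 * qprob g E l js t (js t))"
    using Suc by auto
  have "qprob g E l js (Suc T) (js (Suc T)) \<noteq> 0" using Suc.prems by auto
  from step[OF min_attained integ_Phi grad gs stable lr this]
  have "l (Suc T) (js (Suc T)) \<le> Phi_tilde M F (cumest g E l js (Suc T)) - Phi_tilde M F (cumest g E l js T)
      + \<epsilon> * ((lhat g E l js (Suc T))\<^sup>2 * qprob g E l js (Suc T) (js (Suc T)))" .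
  with IH show ?case by (simp add: sum.cl_ivl_Suc del: cumest.simps) (simp add: algebra_simps)
qed

lemma endbound:
  fixes M :: "'z measure"
    and F :: "real^'n::finite \<Rightarrow> 'z \<Rightarrow> real"
  assumes M: "prob_space M"
    and min_attained: "\<forall>z L. \<exists>p\<in>prob_simplex. \<forall>q\<in>prob_simplex. L \<bullet> p + F p z \<le> L \<bullet> q + F q z"
    and max_attained: "\<forall>z. \<exists>p\<in>prob_simplex. \<forall>q\<in>prob_simplex. F q z \<le> F p z"
    and integ_Phi: "\<forall>L. integrable M (\<lambda>z. INF p\<in>prob_simplex. L \<bullet> p + F p z)"
    and integ_range: "integrable M (\<lambda>z. (SUP p\<in>prob_simplex. F p z) - (INF p\<in>prob_simplex. F p z))"
  shows "Phi_tilde M F L - Phi_tilde M F 0 \<le> L $ i +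
     (\<integral>z. (SUP p\<in>prob_simplex. F p z) - (INF p\<in>prob_simplex. F p z) \<partial>M)"
proof -
  interpret prob_space M by (rule M)
  define e :: "real^'n" where "e = axis i 1"
  have e: "e \<in> prob_simplex" unfolding e_def prob_simplex_def by (auto simp: axis_def)
  have Le: "L \<bullet> e = L $ i" unfolding e_def by (simp add: inner_axis)
  have z0: "(INF p\<in>prob_simplex. 0 \<bullet> p + F p z) = (INF p\<in>prob_simplex. F p z)" for z by simp
  have pt: "(INF p\<in>prob_simplex. L \<bullet> p + F p z) - (INF p\<in>prob_simplex. 0 \<bullet> p + F p z)
      \<le> L $ i + ((SUP p\<in>prob_simplex. F p z) - (INF p\<in>prob_simplex. F p z))" for z
  proof -
    have "(INF p\<in>prob_simplex. L \<bullet> p + F p z) \<le> L \<bullet> e + F e z"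
      using min_attained e by (intro inf_le) auto
    moreover have "F e z \<le> (SUP p\<in>prob_simplex. F p z)"
      using max_attained e by (intro sup_ge) auto
    ultimately show ?thesis unfolding z0 Le by simp
  qed
  have "Phi_tilde M F L - Phi_tilde M F 0 =
      (\<integral>z. (INF p\<in>prob_simplex. L \<bullet> p + F p z) - (INF p\<in>prob_simplex. 0 \<bullet> p + F p z) \<partial>M)"
    unfolding Phi_tilde_def using integ_Phi by (simp only: Bochner_Integration.integral_diff)
  also have "\<dots> \<le> (\<integral>z. L $ i + ((SUP p\<in>prob_simplex. F p z) - (INF p\<in>prob_simplex. F p z)) \<partial>M)"
  proof (rule integral_mono)
    show "integrable M (\<lambda>z. (INF p\<in>prob_simplex. L \<bullet> p + F p z) - (INF p\<in>prob_simplex. 0 \<bullet> p + F p z))"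
      by (rule Bochner_Integration.integrable_diff) (use integ_Phi in blast)+
    show "integrable M (\<lambda>z. L $ i + ((SUP p\<in>prob_simplex. F p z) - (INF p\<in>prob_simplex. F p z)))"
      using integ_range by simp
  qed (rule pt)
  also have "\<dots> = L $ i + (\<integral>z. (SUP p\<in>prob_simplex. F p z) - (INF p\<in>prob_simplex. F p z) \<partial>M)"
    using integ_range by (simp add: prob_space)
  finally show ?thesis .
qed



theorem lemma9:
  fixes M :: "'z measure"
    and F :: "real^'n::finite \<Rightarrow> 'z \<Rightarrow> real"
    and g :: "real^'n \<Rightarrow> real^'n"
    and E :: "'n \<Rightarrow> nat \<Rightarrow> 'k::finite"
    and l :: "nat \<Rightarrow> 'k \<Rightarrow> real"
    and T :: nat and \<epsilon> :: real
  assumes M: "prob_space M"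
    and min_attained: "\<forall>z L. \<exists>p\<in>prob_simplex. \<forall>q\<in>prob_simplex. L \<bullet> p + F p z \<le> L \<bullet> q + F q z"
    and max_attained: "\<forall>z. \<exists>p\<in>prob_simplex. \<forall>q\<in>prob_simplex. F q z \<le> F p z"
    and integ_Phi: "\<forall>L. integrable M (\<lambda>z. INF p\<in>prob_simplex. L \<bullet> p + F p z)"
    and integ_range: "integrable M (\<lambda>z. (SUP p\<in>prob_simplex. F p z) - (INF p\<in>prob_simplex. F p z))"
    and grad: "\<forall>L. (Phi_tilde M F has_derivative (\<lambda>h. g L \<bullet> h)) (at L)"
    and grad_simplex: "\<forall>L. g L \<in> prob_simplex"
    and stable: "\<forall>t (v :: nat \<Rightarrow> real^'n). t \<ge> 1 \<longrightarrow> (\<forall>s\<in>{1..t}. \<forall>i. 0 \<le> v s $ i) \<longrightarrow>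
        dinf (g (\<Sum>s\<in>{1..<t}. v s)) (g (\<Sum>s\<in>{1..t}. v s)) \<le> ereal (\<epsilon> * infnorm (v t))"
    and loss_range: "\<forall>t j. 0 \<le> l t j \<and> l t j \<le> 1"
  shows "ExpL g E l T (\<lambda>js. \<Sum>t\<in>{1..T}. l t (js t))
           - (MIN i. \<Sum>t\<in>{1..T}. l t (E i t))
         \<le> \<epsilon> * ExpL g E l T (\<lambda>js. \<Sum>t\<in>{1..T}. (lhat g E l js t)\<^sup>2 * qprob g E l js t (js t))
           + (\<integral>z. (SUP p\<in>prob_simplex. F p z) - (INF p\<in>prob_simplex. F p z) \<partial>M)"
proof -
  have lr: "\<forall>t j. 0 \<le> l t j" using loss_range by auto
  define R where "R = (\<integral>z. (SUP p\<in>prob_simplex. F p z) - (INF p\<in>prob_simplex. F p z) \<partial>M)"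
  define X where "X js = (\<Sum>t\<in>{1..T}. (lhat g E l js t)\<^sup>2 * qprob g E l js t (js t))" for js
  define S where "S js = (\<Sum>t\<in>{1..T}. l t (js t))" for js
  define Js where "Js = PiE {1..T} (\<lambda>_. UNIV::'k set)"
  have "(MIN i. \<Sum>t\<in>{1..T}. l t (E i t)) \<in> range (\<lambda>i. \<Sum>t\<in>{1..T}. l t (E i t))"
    by (rule Min_in) auto
  then obtain i0 where i0: "(MIN i. \<Sum>t\<in>{1..T}. l t (E i t)) = (\<Sum>t\<in>{1..T}. l t (E i0 t))" by (auto simp only: image_iff)
  have pw: "W g E l T js * S js \<le> W g E l T js * (cumest g E l js T $ i0 + R + \<epsilon> * X js)" for js
  proof (cases "W g E l T js = 0")
    case True then show ?thesis by simp
  next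
    case False
    then have "\<forall>t\<in>{1..T}. qprob g E l js t (js t) \<noteq> 0" unfolding W_def by auto
    from pathwise[OF min_attained integ_Phi grad grad_simplex stable lr this]
    have "S js \<le> Phi_tilde M F (cumest g E l js T) - Phi_tilde M F 0 + \<epsilon> * X js"
      unfolding S_def X_def .
    also have "\<dots> \<le> cumest g E l js T $ i0 + R + \<epsilon> * X js"
      using endbound[OF M min_attained max_attained integ_Phi integ_range, of "cumest g E l js T" i0]
      unfolding R_def by simp
    finally show ?thesis using W_nonneg[OF grad_simplex] by (intro mult_left_mono) auto
  qed
  have "ExpL g E l T S \<le> (\<Sum>js\<in>Js. W g E l T js * (cumest g E l js T $ i0 + R + \<epsilon> * X js))"
    unfolding ExpL_W Js_def by (intro sum_mono pw)
  also have "\<dots> = ExpL g E l T (\<lambda>js. cumest g E l js T $ i0) + R * (\<Sum>js\<in>Js. W g E l T js) + \<epsilon> * ExpL g E l T X"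
    unfolding ExpL_W Js_def
    by (simp add: algebra_simps sum.distrib sum_distrib_left sum_distrib_right)
  also have "\<dots> = ExpL g E l T (\<lambda>js. cumest g E l js T $ i0) + R + \<epsilon> * ExpL g E l T X"
    unfolding Js_def using sum_W[OF grad_simplex, where T=T and E=E and l=l] by simp
  also have "\<dots> \<le> (\<Sum>t\<in>{1..T}. l t (E i0 t)) + R + \<epsilon> * ExpL g E l T X"
    using unbiased[OF grad_simplex lr, of E T i0] by simp
  finally show ?thesis unfolding i0 R_def S_def X_def by simp
qed


end
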